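(* Let $T\subseteq\mathbb{R}^n$ be an action set. Then $\dim T+\dim\mathbf{W}(T)=n$, where $\mathbf{W}(T)=\bigcap_{t\in T}\mathbf{W}(t)$.
   Context: Single-commodity network pricing setting: $G=(\mathcal{V},\mathcal{A})$ directed graph, arc costs $c\ge0$, nonempty tolled arc set $\mathcal{A}_1\subsetneq\mathcal{A}$, $n=|\mathcal{A}_1|$, $N$ node–arc incidence matrix, single origin $o$ and destination $d$ connected by a toll-free path, $b_o=1$, $b_d=-1$, $b_i=0$ otherwise, $\mathcal{X}=\{x\in\mathbb{R}^{\mathcal{A}}: Nx=b,\ x\ge0\}$, $x_{\mathcal{A}_1}$ the restriction of $x$ to $\mathcal{A}_1$. Let $f(t)=\min\{c^\top x+t^\top x_{\mathcal{A}_1}: x\in\mathcal{X}\}$ for $t\in\mathbb{R}^n$, $t\ge0$, and $f(t)=-\infty$ otherwise. An action set is a set $T=\{t:(t,z)\in F\text{ for some }z\}$ where $F$ is a face of $\operatorname{epi}(-f)$ whose affine hull's direction space does not contain $(0,1)$. For $t\ge0$, $\mathbf{W}(t)$ is the set of $w$ such that $(w,x)$ is optimal for some $x$ in $\min_{w,x}\{c^\top x+t^\top w: x_{\mathcal{A}_1}\le w,\ Nx=b,\ w\ge0,\ x\ge0\}$. $\dim$ denotes the dimension of the affine hull. *)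

theory Defs
  imports "HOL-Analysis.Analysis" "HOL-Library.Extended_Real"
begin

(* Arcs have type 'k + 'u: tolled arcs A1 = Inl ` UNIV (n = CARD('k)),
   toll-free arcs Inr ` UNIV. *)

definition node_supply :: "'v \<Rightarrow> 'v \<Rightarrow> 'v \<Rightarrow> real" where
  "node_supply o' d i = (if i = o' then 1 else if i = d then -1 else 0)"

definition incid :: "(('k + 'u) \<Rightarrow> 'v) \<Rightarrow> (('k + 'u) \<Rightarrow> 'v) \<Rightarrow>
    (('k + 'u::finite) \<Rightarrow> real) \<Rightarrow> 'v \<Rightarrow> real" where
  "incid tailf headf x i = (\<Sum>a\<in>{a. tailf a = i}. x a) - (\<Sum>a\<in>{a. headf a = i}. x a)"

definition flows :: "(('k + 'u) \<Rightarrow> 'v) \<Rightarrow> (('k + 'u) \<Rightarrow> 'v) \<Rightarrow> 'v \<Rightarrow> 'v \<Rightarrow>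
    (('k + 'u::finite) \<Rightarrow> real) set" where
  "flows tailf headf o' d = {x. (\<forall>i. incid tailf headf x i = node_supply o' d i) \<and> (\<forall>a. 0 \<le> x a)}"

definition costc :: "(('k + 'u::finite) \<Rightarrow> real) \<Rightarrow> (('k + 'u) \<Rightarrow> real) \<Rightarrow> real" where
  "costc c x = (\<Sum>a\<in>UNIV. c a * x a)"

definition tollc :: "real ^ ('k::finite) \<Rightarrow> (('k + 'u) \<Rightarrow> real) \<Rightarrow> real" where
  "tollc t x = (\<Sum>k\<in>UNIV. t $ k * x (Inl k))"

definition fval :: "(('k + 'u) \<Rightarrow> 'v) \<Rightarrow> (('k + 'u) \<Rightarrow> 'v) \<Rightarrow> 'v \<Rightarrow> 'v \<Rightarrow>
    (('k::finite + 'u::finite) \<Rightarrow> real) \<Rightarrow> real ^ 'k \<Rightarrow> ereal" where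
  "fval tailf headf o' d c t =
     (if (\<forall>k. 0 \<le> t $ k)
      then Inf {ereal (costc c x + tollc t x) | x. x \<in> flows tailf headf o' d}
      else -\<infinity>)"

definition epi_negf :: "(('k + 'u) \<Rightarrow> 'v) \<Rightarrow> (('k + 'u) \<Rightarrow> 'v) \<Rightarrow> 'v \<Rightarrow> 'v \<Rightarrow>
    (('k::finite + 'u::finite) \<Rightarrow> real) \<Rightarrow> ((real ^ 'k) \<times> real) set" where
  "epi_negf tailf headf o' d c = {(t, z). - fval tailf headf o' d c t \<le> ereal z}"

definition aff_dir :: "'a::real_vector set \<Rightarrow> 'a set" where
  "aff_dir S = span {x - y | x y. x \<in> S \<and> y \<in> S}"

definition action_set :: "(('k + 'u) \<Rightarrow> 'v) \<Rightarrow> (('k + 'u) \<Rightarrow> 'v) \<Rightarrow> 'v \<Rightarrow> 'v \<Rightarrow>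
    (('k::finite + 'u::finite) \<Rightarrow> real) \<Rightarrow> (real ^ 'k) set \<Rightarrow> bool" where
  "action_set tailf headf o' d c T \<longleftrightarrow>
     (\<exists>F. F face_of epi_negf tailf headf o' d c \<and> F \<noteq> {} \<and>
          (0, 1) \<notin> aff_dir F \<and> T = fst ` F)"

definition feasWX :: "(('k + 'u) \<Rightarrow> 'v) \<Rightarrow> (('k + 'u) \<Rightarrow> 'v) \<Rightarrow> 'v \<Rightarrow> 'v \<Rightarrow>
    ((real ^ ('k::finite)) \<times> (('k + 'u::finite) \<Rightarrow> real)) set" where
  "feasWX tailf headf o' d = {(w, x). (\<forall>k. x (Inl k) \<le> w $ k) \<and> x \<in> flows tailf headf o' d \<and>
                                 (\<forall>k. 0 \<le> w $ k)}"

definition Wset :: "(('k + 'u) \<Rightarrow> 'v) \<Rightarrow> (('k + 'u) \<Rightarrow> 'v) \<Rightarrow> 'v \<Rightarrow> 'v \<Rightarrow>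
    (('k::finite + 'u::finite) \<Rightarrow> real) \<Rightarrow> real ^ 'k \<Rightarrow> (real ^ 'k) set" where
  "Wset tailf headf o' d c t = {w. \<exists>x. (w, x) \<in> feasWX tailf headf o' d \<and>
      (\<forall>(w', x') \<in> feasWX tailf headf o' d.
          costc c x + inner t w \<le> costc c x' + inner t w')}"

end

theory Submission
  imports Defs
begin


lemma span_sub_affine_hull:
  fixes H :: "'a::euclidean_space set"
  assumes "h0 \<in> H" "p \<in> span ((\<lambda>x. x - h0) ` H)"
  shows "h0 + p \<in> affine hull H"
proof -
  have sub: "subspace ((\<lambda>x. x - h0) ` (affine hull H))"
    by (rule affine_diffs_subspace_subtract) (auto simp: assms hull_inc)
  have "(\<lambda>x. x - h0) ` H \<subseteq> (\<lambda>x. x - h0) ` (affine hull H)"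
    by (auto simp: hull_inc)
  then have "span ((\<lambda>x. x - h0) ` H) \<subseteq> (\<lambda>x. x - h0) ` (affine hull H)"
    using span_minimal sub by blast
  then obtain z where "z \<in> affine hull H" "p = z - h0" using assms(2) by blast
  then show ?thesis by simp
qed

lemma perturb:
  fixes S :: "'a::euclidean_space set" and v0 :: 'a
  assumes polyS: "polyhedron S"
    and H_def: "H = {h\<in>S. \<forall>y\<in>S. v0 \<bullet> h \<le> v0 \<bullet> y}"
    and Hne: "H \<noteq> {}"
  obtains \<kappa> where "\<kappa> > 0" "\<And>v h y. (\<And>h1 h2. h1\<in>H \<Longrightarrow> h2\<in>H \<Longrightarrow> v \<bullet> (h1 - h2) = 0)
        \<Longrightarrow> norm v < \<kappa> \<Longrightarrow> h \<in> H \<Longrightarrow> y \<in> S \<Longrightarrow> (v0 + v) \<bullet> h \<le> (v0 + v) \<bullet> y"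
proof -
  obtain F where finF: "finite F" and SF: "S = \<Inter>F"
    and hF: "\<forall>h\<in>F. \<exists>a b. a \<noteq> 0 \<and> h = {x. a \<bullet> x \<le> b}"
    using polyS unfolding polyhedron_def by blast
  obtain a b where ab: "\<And>h. h\<in>F \<Longrightarrow> h = {x. a h \<bullet> x \<le> b h}"
    using hF by metis
  have Smem: "y \<in> S \<longleftrightarrow> (\<forall>h\<in>F. a h \<bullet> y \<le> b h)" for y
    using ab SF by auto
  have convS: "convex S" using polyS polyhedron_imp_convex by blast
  have convH: "convex H"
    unfolding convex_def
  proof (intro allI impI ballI)
    fix x y u v assume xy: "x \<in> H" "y \<in> H" and uv: "0 \<le> (u::real)" "0 \<le> v" "u + v = 1"
    have "u *\<^sub>R x + v *\<^sub>R y \<in> S" using xy uv convS H_def by (auto simp: convex_def)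
    moreover have "v0 \<bullet> (u *\<^sub>R x + v *\<^sub>R y) \<le> v0 \<bullet> z" if "z \<in> S" for z
    proof -
      have "v0 \<bullet> x \<le> v0 \<bullet> z" "v0 \<bullet> y \<le> v0 \<bullet> z" using xy that H_def by auto
      then have "u * (v0 \<bullet> x) + v * (v0 \<bullet> y) \<le> u * (v0 \<bullet> z) + v * (v0 \<bullet> z)"
        using uv by (simp add: add_mono mult_left_mono)
      moreover have "u * (v0 \<bullet> z) + v * (v0 \<bullet> z) = v0 \<bullet> z"
        using uv by (metis distrib_right mult_1)
      ultimately show ?thesis by (simp add: inner_add_right)
    qed
    ultimately show "u *\<^sub>R x + v *\<^sub>R y \<in> H" using H_def by auto
  qed
  obtain h0 where h0: "h0 \<in> rel_interior H"
    using rel_interior_eq_empty[OF convH] Hne by blast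
  then obtain e where e: "e > 0" "cball h0 e \<inter> affine hull H \<subseteq> H" and h0H: "h0 \<in> H"
    using mem_rel_interior_cball by blast
  define D where "D = span ((\<lambda>x. x - h0) ` H)"
  have D0: "\<exists>s>0. h0 + s *\<^sub>R p \<in> H \<and> h0 - s *\<^sub>R p \<in> H" if "p \<in> D" for p
  proof (cases "p = 0")
    case True then show ?thesis using h0H by (intro exI[of _ 1]) auto
  next
    case False
    define s where "s = e / norm p"
    have s: "s > 0" using e False by (simp add: s_def)
    have "s *\<^sub>R p \<in> D" "- (s *\<^sub>R p) \<in> D" using that unfolding D_def
      by (auto intro: span_mul span_neg)
    then have "h0 + s *\<^sub>R p \<in> affine hull H" "h0 + - (s *\<^sub>R p) \<in> affine hull H"
      using span_sub_affine_hull[OF h0H] unfolding D_def by blast+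
    moreover have "norm (s *\<^sub>R p) = e" using False e by (simp add: s_def)
    ultimately have "h0 + s *\<^sub>R p \<in> H" "h0 + - (s *\<^sub>R p) \<in> H" using e(2)
      by (auto simp: dist_norm)
    then show ?thesis using s by (intro exI[of _ s]) auto
  qed
  have v0const: "v0 \<bullet> h = v0 \<bullet> h0" if "h \<in> H" for h
    using that h0H H_def by (auto intro: antisym)
  have D_v0: "v0 \<bullet> p = 0" if pD: "p \<in> D" for p
  proof -
    obtain s where "s > 0" "h0 + s *\<^sub>R p \<in> H" using D0[OF pD] by blast
    then have "v0 \<bullet> (h0 + s *\<^sub>R p) = v0 \<bullet> h0" using v0const by blast
    then show ?thesis using \<open>s > 0\<close> by (simp add: inner_add_right)
  qed
  have D_act: "a h \<bullet> p = 0" if pD: "p \<in> D" "h \<in> F" "a h \<bullet> h0 = b h" for p h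
  proof -
    obtain s where s: "s > 0" "h0 + s *\<^sub>R p \<in> H" "h0 - s *\<^sub>R p \<in> H" using D0[OF pD(1)] by blast
    then have "h0 + s *\<^sub>R p \<in> S" "h0 - s *\<^sub>R p \<in> S" using H_def by auto
    then have "a h \<bullet> (h0 + s *\<^sub>R p) \<le> b h" "a h \<bullet> (h0 - s *\<^sub>R p) \<le> b h"
      using Smem pD(2) by blast+
    then have "s * (a h \<bullet> p) \<le> 0" "- (s * (a h \<bullet> p)) \<le> 0"
      using pD(3) by (simp_all add: inner_add_right inner_diff_right)
    then have "s * (a h \<bullet> p) = 0" by linarith
    then show ?thesis using s(1) by simp
  qed
  define C where "C = {d. \<forall>h\<in>F. a h \<bullet> h0 = b h \<longrightarrow> a h \<bullet> d \<le> 0}"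
  have C1: "y - h0 \<in> C" if "y \<in> S" for y
    using that h0H H_def Smem unfolding C_def by (auto simp: inner_diff_right)
  have C2: "\<exists>s>0. h0 + s *\<^sub>R d \<in> S" if "d \<in> C" for d
  proof -
    define I where "I = {h\<in>F. a h \<bullet> h0 < b h}"
    define s where "s = Min (insert 1 ((\<lambda>h. (b h - a h \<bullet> h0) / (\<bar>a h \<bullet> d\<bar> + 1)) ` I))"
    have finI: "finite I" using finF by (simp add: I_def)
    have s_pos: "s > 0" unfolding s_def using finI
      by (subst Min_gr_iff) (auto simp: I_def)
    have s_le: "s \<le> (b h - a h \<bullet> h0) / (\<bar>a h \<bullet> d\<bar> + 1)" if "h \<in> I" for h
      unfolding s_def using finI that by (intro Min_le) auto
    have "a h \<bullet> (h0 + s *\<^sub>R d) \<le> b h" if hF: "h \<in> F" for h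
    proof (cases "a h \<bullet> h0 = b h")
      case True
      then have "a h \<bullet> d \<le> 0" using \<open>d \<in> C\<close> hF C_def by blast
      then show ?thesis using True s_pos by (simp add: inner_add_right mult_nonneg_nonpos)
    next
      case False
      have h0S: "h0 \<in> S" using h0H H_def by auto
      then have "a h \<bullet> h0 < b h" using False Smem hF by force
      then have hI: "h \<in> I" using hF I_def by auto
      have "s * \<bar>a h \<bullet> d\<bar> \<le> (b h - a h \<bullet> h0) / (\<bar>a h \<bullet> d\<bar> + 1) * \<bar>a h \<bullet> d\<bar>"
        using mult_right_mono[OF s_le[OF hI], of "\<bar>a h \<bullet> d\<bar>"] by simp
      also have "\<dots> \<le> b h - a h \<bullet> h0"
      proof -
        have "(b h - a h \<bullet> h0) * \<bar>a h \<bullet> d\<bar> \<le> (b h - a h \<bullet> h0) * (\<bar>a h \<bullet> d\<bar> + 1)"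
          using \<open>a h \<bullet> h0 < b h\<close> by (simp add: mult_left_mono)
        moreover have "0 < \<bar>a h \<bullet> d\<bar> + 1" by simp
        ultimately show ?thesis by (simp add: pos_divide_le_eq mult.commute)
      qed
      finally have "s * (a h \<bullet> d) \<le> b h - a h \<bullet> h0"
        using s_pos by (smt (verit) abs_ge_self mult_left_mono)
      then show ?thesis by (simp add: inner_add_right)
    qed
    then show ?thesis using s_pos Smem by blast
  qed
  have C3: "v0 \<bullet> d \<ge> 0" if dC: "d \<in> C" for d
  proof -
    obtain s where "s > 0" "h0 + s *\<^sub>R d \<in> S" using C2[OF dC] by blast
    then have "v0 \<bullet> h0 \<le> v0 \<bullet> (h0 + s *\<^sub>R d)" using h0H H_def by auto
    then show ?thesis using \<open>s > 0\<close> by (simp add: inner_add_right zero_le_mult_iff)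
  qed
  define P where "P = {q. \<forall>p\<in>D. q \<bullet> p = 0}"
  have C4: "q = 0" if qC: "q \<in> C" "q \<in> P" "v0 \<bullet> q = 0" for q
  proof -
    obtain s where s: "s > 0" "h0 + s *\<^sub>R q \<in> S" using C2[OF qC(1)] by blast
    have "v0 \<bullet> (h0 + s *\<^sub>R q) = v0 \<bullet> h0" using qC(3) by (simp add: inner_add_right)
    then have "h0 + s *\<^sub>R q \<in> H" using s h0H H_def by auto
    then have "(h0 + s *\<^sub>R q) - h0 \<in> D" unfolding D_def by (intro span_base imageI)
    then have "s *\<^sub>R q \<in> D" by simp
    then have "(1/s) *\<^sub>R (s *\<^sub>R q) \<in> D" unfolding D_def by (rule span_mul)
    then have "q \<in> D" using s by simp
    then have "q \<bullet> q = 0" using qC(2) P_def by blast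
    then show ?thesis by simp
  qed
  have closedC: "closed C"
  proof -
    have "C = (\<Inter>h\<in>{h\<in>F. a h \<bullet> h0 = b h}. {d. a h \<bullet> d \<le> 0})" unfolding C_def by auto
    then show ?thesis by (auto intro!: closed_INT closed_halfspace_le)
  qed
  have closedP: "closed P"
  proof -
    have "P = (\<Inter>p\<in>D. {q. p \<bullet> q = 0})" unfolding P_def by (auto simp: inner_commute)
    then show ?thesis by (auto intro!: closed_INT closed_hyperplane)
  qed
  obtain \<kappa> where kpos: "\<kappa> > 0" and kq: "\<And>q. q \<in> C \<Longrightarrow> q \<in> P \<Longrightarrow> \<kappa> * norm q \<le> v0 \<bullet> q"
  proof (cases "C \<inter> P \<inter> sphere 0 1 = {}")
    case True
    have "q = 0" if "q \<in> C" "q \<in> P" for q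
    proof (rule ccontr)
      assume "q \<noteq> 0"
      define q' where "q' = (1 / norm q) *\<^sub>R q"
      have "q' \<in> C" using that(1) \<open>q \<noteq> 0\<close> unfolding C_def q'_def
        by (auto simp: divide_nonpos_pos)
      moreover have "q' \<in> P" using that(2) unfolding P_def q'_def by auto
      moreover have "q' \<in> sphere 0 1" using \<open>q \<noteq> 0\<close> by (simp add: q'_def)
      ultimately show False using True by blast
    qed
    then have "1 * norm q \<le> v0 \<bullet> q" if "q \<in> C" "q \<in> P" for q using that by force
    then show ?thesis using that[of 1] by auto
  next
    case False
    have "compact (C \<inter> P \<inter> sphere 0 1)"
      using compact_Int_closed[OF compact_sphere closed_Int[OF closedC closedP], of 0 1]
      by (simp add: Int_commute Int_left_commute)
    then obtain q0 where q0: "q0 \<in> C \<inter> P \<inter> sphere 0 1"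
      and q0min: "\<And>q. q \<in> C \<inter> P \<inter> sphere 0 1 \<Longrightarrow> v0 \<bullet> q0 \<le> v0 \<bullet> q"
    proof -
      have "continuous_on (C \<inter> P \<inter> sphere 0 1) (\<lambda>q. v0 \<bullet> q)"
        by (intro continuous_intros)
      then have "\<exists>x\<in>C \<inter> P \<inter> sphere 0 1. \<forall>y\<in>C \<inter> P \<inter> sphere 0 1. v0 \<bullet> x \<le> v0 \<bullet> y"
        using continuous_attains_inf[of "C \<inter> P \<inter> sphere 0 1" "\<lambda>q. v0 \<bullet> q"] False \<open>compact _\<close>
        by blast
      then show ?thesis using that by blast
    qed
    have "q0 \<noteq> 0" using q0 by auto
    then have k: "v0 \<bullet> q0 > 0" using C3 C4 q0 by force
    show ?thesis
    proof (rule that[OF k])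
      fix q assume q: "q \<in> C" "q \<in> P"
      show "v0 \<bullet> q0 * norm q \<le> v0 \<bullet> q"
      proof (cases "q = 0")
        case True then show ?thesis by simp
      next
        case False
        define q' where "q' = (1 / norm q) *\<^sub>R q"
        have "q' \<in> C" using q(1) False unfolding C_def q'_def
          by (auto simp: divide_nonpos_pos)
        moreover have "q' \<in> P" using q(2) unfolding P_def q'_def by auto
        moreover have "q' \<in> sphere 0 1" using False by (simp add: q'_def)
        ultimately have "v0 \<bullet> q0 \<le> v0 \<bullet> q'" using q0min by blast
        then have "v0 \<bullet> q0 \<le> (v0 \<bullet> q) / norm q" by (simp add: q'_def)
        then show ?thesis using False by (simp add: pos_le_divide_eq)
      qed
    qed
  qed
  show ?thesis
  proof (rule that[OF kpos])
    fix v h y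
    assume vH: "\<And>h1 h2. h1\<in>H \<Longrightarrow> h2\<in>H \<Longrightarrow> v \<bullet> (h1 - h2) = 0"
      and nv: "norm v < \<kappa>" and hH: "h \<in> H" and yS: "y \<in> S"
    have D_v: "v \<bullet> p = 0" if pD: "p \<in> D" for p
    proof -
      obtain s where "s > 0" "h0 + s *\<^sub>R p \<in> H" using D0[OF pD] by blast
      then have "v \<bullet> ((h0 + s *\<^sub>R p) - h0) = 0" using vH h0H by blast
      then show ?thesis using \<open>s > 0\<close> by simp
    qed
    define d where "d = y - h0"
    have dC: "d \<in> C" using C1[OF yS] d_def by simp
    obtain p q where p: "p \<in> D" and q: "\<And>w. w \<in> D \<Longrightarrow> orthogonal q w" and dpq: "d = p + q"
      using orthogonal_subspace_decomp_exists[of "(\<lambda>x. x - h0) ` H" d] unfolding D_def by blast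
    have qP: "q \<in> P" using q unfolding P_def orthogonal_def by blast
    have qC: "q \<in> C"
      using dC D_act[OF p] unfolding C_def dpq by (auto simp: inner_add_right)
    have hD: "h - h0 \<in> D" unfolding D_def using hH by (intro span_base imageI)
    have "(v0 + v) \<bullet> (y - h) = (v0 + v) \<bullet> d - (v0 + v) \<bullet> (h - h0)"
      unfolding d_def by (simp add: inner_diff_right)
    also have "(v0 + v) \<bullet> (h - h0) = 0" using D_v0[OF hD] D_v[OF hD] by (simp add: inner_add_left)
    also have "(v0 + v) \<bullet> d = v0 \<bullet> q + v \<bullet> q"
      using D_v0[OF p] D_v[OF p] unfolding dpq by (simp add: inner_add_left inner_add_right)
    finally have eq: "(v0 + v) \<bullet> (y - h) = v0 \<bullet> q + v \<bullet> q" by simp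
    have "\<kappa> * norm q \<le> v0 \<bullet> q" using kq[OF qC qP] .
    moreover have "\<bar>v \<bullet> q\<bar> \<le> norm v * norm q" by (rule Cauchy_Schwarz_ineq2)
    moreover have "norm v * norm q \<le> \<kappa> * norm q" using nv by (simp add: mult_right_mono)
    ultimately have "0 \<le> v0 \<bullet> q + v \<bullet> q" by linarith
    then show "(v0 + v) \<bullet> h \<le> (v0 + v) \<bullet> y" using eq by (simp add: inner_diff_right)
  qed
qed


lemma lp_attain_step:
  fixes S :: "'a::euclidean_space set"
  assumes polyS: "polyhedron S" and yS: "y \<in> S" and bnd: "\<And>y. y \<in> S \<Longrightarrow> m \<le> v \<bullet> y"
    and y'S: "y' \<in> S" and less: "v \<bullet> y' < v \<bullet> y"
  shows "\<exists>F p. F face_of S \<and> F \<noteq> S \<and> p \<in> F \<and> v \<bullet> p \<le> v \<bullet> y"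
proof -
  define d where "d = y' - y"
  have vd: "v \<bullet> d < 0" using less by (simp add: d_def inner_diff_right)
  have dnz: "d \<noteq> 0" using vd by auto
  define R where "R = {s. 0 \<le> s \<and> y + s *\<^sub>R d \<in> S}"
  have closedS: "closed S" using polyS polyhedron_imp_closed by blast
  have "closed R"
  proof -
    have "R = {0..} \<inter> (\<lambda>s. y + s *\<^sub>R d) -` S" unfolding R_def by auto
    moreover have "closed ((\<lambda>s. y + s *\<^sub>R d) -` S)"
      by (intro continuous_closed_vimage closedS) (auto intro!: continuous_intros)
    ultimately show ?thesis by (auto intro: closed_Int)
  qed
  moreover have "bounded R"
  proof -
    have "s \<le> (v \<bullet> y - m) / (- (v \<bullet> d))" if "s \<in> R" for s
    proof -
      have "m \<le> v \<bullet> (y + s *\<^sub>R d)" using that bnd R_def by auto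
      then have "s * (- (v \<bullet> d)) \<le> v \<bullet> y - m" by (simp add: inner_add_right)
      moreover have pos: "0 < - (v \<bullet> d)" using vd by simp
      ultimately show ?thesis using pos_le_divide_eq[OF pos] by blast
    qed
    then have "R \<subseteq> {0 .. (v \<bullet> y - m) / (- (v \<bullet> d))}" using R_def by auto
    then show ?thesis using bounded_closed_interval bounded_subset by blast
  qed
  ultimately have "compact R" using compact_eq_bounded_closed by blast
  moreover have "R \<noteq> {}" using yS R_def by force
  ultimately obtain s where sR: "s \<in> R" and smax: "\<And>s'. s' \<in> R \<Longrightarrow> s' \<le> s"
    using continuous_attains_sup[of R "\<lambda>s. s"] by (auto intro: continuous_intros)
  define p where "p = y + s *\<^sub>R d"
  have pS: "p \<in> S" using sR R_def p_def by auto
  have "p \<notin> rel_interior S"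
  proof
    assume "p \<in> rel_interior S"
    then obtain e where e: "e > 0" "cball p e \<inter> affine hull S \<subseteq> S"
      using mem_rel_interior_cball by blast
    define s' where "s' = s + e / norm d"
    have "y + s' *\<^sub>R d = (1 - s') *\<^sub>R y + s' *\<^sub>R y'"
      by (simp add: d_def algebra_simps)
    also have "\<dots> \<in> affine hull S"
      by (intro mem_affine[OF affine_affine_hull]) (auto simp: hull_inc yS y'S)
    finally have "y + s' *\<^sub>R d \<in> affine hull S" .
    moreover have "dist p (y + s' *\<^sub>R d) = e"
    proof -
      have "p - (y + s' *\<^sub>R d) = - ((e / norm d) *\<^sub>R d)"
        by (simp add: p_def s'_def algebra_simps)
      then show ?thesis using dnz e by (simp add: dist_norm)
    qed
    ultimately have "y + s' *\<^sub>R d \<in> S" using e by auto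
    moreover have "0 \<le> s'" using sR R_def e dnz by (simp add: s'_def)
    ultimately have "s' \<le> s" using smax R_def by auto
    moreover have "e / norm d > 0" using e dnz by simp
    ultimately show False by (simp add: s'_def)
  qed
  then have "p \<in> rel_frontier S" using pS closedS by (simp add: rel_frontier_def)
  then have "p \<in> \<Union> {F. F face_of S \<and> F \<noteq> S}"
    using rel_frontier_of_polyhedron_alt[OF polyS] by simp
  then obtain F where "F face_of S" "F \<noteq> S" "p \<in> F" by blast
  moreover have "v \<bullet> p \<le> v \<bullet> y"
    using sR R_def vd by (simp add: p_def inner_add_right mult_nonneg_nonpos)
  ultimately show ?thesis by blast
qed

lemma lp_attain:
  fixes S :: "'a::euclidean_space set"
  assumes "polyhedron S" "S \<noteq> {}" "\<And>y. y \<in> S \<Longrightarrow> m \<le> v \<bullet> y"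
  shows "\<exists>h\<in>S. \<forall>y\<in>S. v \<bullet> h \<le> v \<bullet> y"
  using assms
proof (induction "nat (aff_dim S)" arbitrary: S rule: less_induct)
  case less
  show ?case
  proof (rule ccontr)
    assume nomin: "\<not> (\<exists>h\<in>S. \<forall>y\<in>S. v \<bullet> h \<le> v \<bullet> y)"
    define Fs where "Fs = {F. F face_of S \<and> F \<noteq> S \<and> F \<noteq> {}}"
    have finFs: "finite Fs" using finite_polyhedron_faces[OF less.prems(1)] Fs_def by simp
    have IH: "\<exists>h\<in>F. \<forall>y\<in>F. v \<bullet> h \<le> v \<bullet> y" if "F \<in> Fs" for F
    proof -
      have F: "F face_of S" "F \<noteq> S" "F \<noteq> {}" using that Fs_def by auto
      have "aff_dim F < aff_dim S"
        using face_of_aff_dim_lt[OF polyhedron_imp_convex[OF less.prems(1)] F(1,2)] .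
      moreover have "aff_dim F \<noteq> -1" using F(3) aff_dim_empty by blast
      then have "aff_dim F \<ge> 0" using aff_dim_geq[of F] by linarith
      ultimately have "nat (aff_dim F) < nat (aff_dim S)" by simp
      moreover have "polyhedron F" using face_of_polyhedron_polyhedron[OF less.prems(1) F(1)] .
      moreover have "\<And>y. y \<in> F \<Longrightarrow> m \<le> v \<bullet> y"
        using less.prems(3) face_of_imp_subset[OF F(1)] by blast
      ultimately show ?thesis using less.hyps[of F] F(3) by blast
    qed
    then obtain hf where hf: "\<And>F. F \<in> Fs \<Longrightarrow> hf F \<in> F \<and> (\<forall>y\<in>F. v \<bullet> hf F \<le> v \<bullet> y)"
      by metis
    have cover: "\<exists>F\<in>Fs. v \<bullet> hf F \<le> v \<bullet> y" if yS: "y \<in> S" for y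
    proof -
      obtain y' where "y' \<in> S" "v \<bullet> y' < v \<bullet> y" using nomin yS by force
      then obtain F p where "F face_of S" "F \<noteq> S" "p \<in> F" "v \<bullet> p \<le> v \<bullet> y"
        using lp_attain_step[OF less.prems(1) yS less.prems(3)] by blast
      moreover then have FF: "F \<in> Fs" using Fs_def by auto
      ultimately have "v \<bullet> hf F \<le> v \<bullet> y" using hf[OF FF] by (meson order_trans)
      then show ?thesis using FF by blast
    qed
    obtain y0 where "y0 \<in> S" using less.prems(2) by blast
    then have "Fs \<noteq> {}" using cover by blast
    then obtain F0 where F0: "F0 \<in> Fs" "\<And>F. F \<in> Fs \<Longrightarrow> v \<bullet> hf F0 \<le> v \<bullet> hf F"
    proof -
      have "Min ((\<lambda>F. v \<bullet> hf F) ` Fs) \<in> (\<lambda>F. v \<bullet> hf F) ` Fs"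
        using finFs \<open>Fs \<noteq> {}\<close> by (intro Min_in) auto
      then obtain F0 where F0: "F0 \<in> Fs" "v \<bullet> hf F0 = Min ((\<lambda>F. v \<bullet> hf F) ` Fs)" by auto
      have "\<forall>F\<in>Fs. v \<bullet> hf F0 \<le> v \<bullet> hf F" using finFs F0(2) by (auto intro: Min_le)
      with F0(1) obtain F0 where "F0 \<in> Fs" "\<forall>F\<in>Fs. v \<bullet> hf F0 \<le> v \<bullet> hf F" by blast
      then show ?thesis using that by blast
    qed
    have "hf F0 \<in> S" using hf[OF F0(1)] F0(1) Fs_def face_of_imp_subset by blast
    moreover have "\<forall>y\<in>S. v \<bullet> hf F0 \<le> v \<bullet> y"
      using cover F0(2) by (meson order_trans)
    ultimately show False using nomin by blast
  qed
qed



locale net =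
  fixes tailf headf :: "('k::finite + 'u::finite) \<Rightarrow> 'v::finite"
    and c :: "('k + 'u) \<Rightarrow> real"
    and o' d :: 'v
  assumes c_nonneg: "\<forall>a. 0 \<le> c a"
    and od: "o' \<noteq> d"
    and toll_free_path: "(o', d) \<in> {(tailf (Inr u), headf (Inr u)) | u. True}\<^sup>*"
begin

definition Q where "Q = feasWX tailf headf o' d"
definition psi :: "real^'k \<Rightarrow> ((real^'k) \<times> (('k+'u) \<Rightarrow> real)) \<Rightarrow> real"
  where "psi t p = costc c (snd p) + inner t (fst p)"
definition opt where "opt t p \<longleftrightarrow> p \<in> Q \<and> (\<forall>q\<in>Q. psi t p \<le> psi t q)"
definition V where "V t = psi t (SOME p. opt t p)"
definition Qv :: "((real^'k) \<times> (real^('k+'u))) set" where "Qv = {p. (fst p, vec_nth (snd p)) \<in> Q}"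
definition vc :: "real^('k+'u)" where "vc = vec_lambda c"

lemma incid_add: "incid tailf headf (\<lambda>a. x a + y a) i = incid tailf headf x i + incid tailf headf y i"
  by (simp add: incid_def sum.distrib)

lemma incid_ind: "incid tailf headf (\<lambda>a. if a = b then 1 else 0) i =
   (if tailf b = i then 1 else 0) - (if headf b = i then 1 else 0)"
  by (simp add: incid_def sum.delta)

lemma reach_flow:
  assumes "(o', j) \<in> {(tailf (Inr u), headf (Inr u)) | u. True}\<^sup>*"
  shows "\<exists>x. (\<forall>a. 0 \<le> x a) \<and> (\<forall>i. incid tailf headf x i = (if i = o' then 1 else 0) - (if i = j then 1 else 0))"
  using assms
proof (induction rule: rtrancl_induct)
  case base
  show ?case by (intro exI[of _ "\<lambda>_. 0"]) (simp add: incid_def)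
next
  case (step j j')
  then obtain x where x: "\<forall>a. 0 \<le> x a"
    "\<forall>i. incid tailf headf x i = (if i = o' then 1 else 0) - (if i = j then 1 else 0)" by blast
  obtain u where u: "j = tailf (Inr u)" "j' = headf (Inr u)" using step(2) by blast
  define y where "y = (\<lambda>a. x a + (if a = Inr u then 1 else 0))"
  have "\<forall>a. 0 \<le> y a" using x(1) by (simp add: y_def)
  moreover have "incid tailf headf y i = (if i = o' then 1 else 0) - (if i = j' then 1 else 0)" for i
    unfolding y_def incid_add incid_ind using x(2) u by auto
  ultimately show ?case by blast
qed

lemma flow_exists: "\<exists>x. x \<in> flows tailf headf o' d"
proof -
  obtain x where "\<forall>a. 0 \<le> x a" "\<forall>i. incid tailf headf x i = (if i = o' then 1 else 0) - (if i = d then 1 else 0)"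
    using reach_flow[OF toll_free_path] by blast
  then have "x \<in> flows tailf headf o' d" using od by (auto simp: flows_def node_supply_def)
  then show ?thesis by blast
qed

lemma psi_inner: "psi t (w, x) = inner (t, vc) (w, vec_lambda x)"
  by (simp add: psi_def costc_def vc_def inner_vec_def inner_commute)

lemma vec_nth_lambda: "vec_nth (vec_lambda x) = x"
  by (rule ext) simp

lemma Qv_iff: "(w, vec_lambda x) \<in> Qv \<longleftrightarrow> (w, x) \<in> Q"
  by (simp add: Qv_def vec_nth_lambda)

lemma Q_nonempty: "\<exists>p. p \<in> Q"
proof -
  obtain x where x: "x \<in> flows tailf headf o' d" using flow_exists by blast
  then have "((\<chi> k. x (Inl k)), x) \<in> Q" by (auto simp: Q_def feasWX_def flows_def)
  then show ?thesis by blast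
qed

lemma Q_nonneg: "(w, x) \<in> Q \<Longrightarrow> (\<forall>k. 0 \<le> w $ k) \<and> (\<forall>a. 0 \<le> x a)"
  by (auto simp: Q_def feasWX_def flows_def)

lemma psi_nonneg: "(\<forall>k. 0 \<le> t $ k) \<Longrightarrow> p \<in> Q \<Longrightarrow> 0 \<le> psi t p"
  using Q_nonneg[of "fst p" "snd p"] c_nonneg
  by (auto simp: psi_def costc_def inner_vec_def intro!: add_nonneg_nonneg sum_nonneg)


lemma poly_INT: "(\<And>k. polyhedron (A k)) \<Longrightarrow> polyhedron (\<Inter>k::'z::finite. A k)"
  by (intro polyhedron_Inter) auto

definition nv :: "'v \<Rightarrow> real^('k+'u)" where
  "nv i = (\<chi> a. (if tailf a = i then 1 else 0) - (if headf a = i then 1 else 0))"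

lemma incid_inner: "incid tailf headf x i = nv i \<bullet> vec_lambda x"
proof -
  have "incid tailf headf x i = (\<Sum>a\<in>UNIV. if tailf a = i then x a else 0) - (\<Sum>a\<in>UNIV. if headf a = i then x a else 0)"
    unfolding incid_def using sum.inter_filter[of UNIV x "\<lambda>a. tailf a = i"] sum.inter_filter[of UNIV x "\<lambda>a. headf a = i"]
    by simp
  also have "\<dots> = nv i \<bullet> vec_lambda x"
  proof -
    have m: "(if P then 1 else 0) * (y::real) = (if P then y else 0)" for P y by simp
    show ?thesis by (simp add: nv_def inner_vec_def left_diff_distrib sum_subtractf m)
  qed
  finally show ?thesis .
qed

lemma Qv_eq: "Qv = (\<Inter>k. {p. (- axis k 1, axis (Inl k) 1) \<bullet> p \<le> 0}) \<inter> (\<Inter>i. {p. (0, nv i) \<bullet> p = node_supply o' d i})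
   \<inter> (\<Inter>a. {p. (0, - axis a 1) \<bullet> p \<le> 0}) \<inter> (\<Inter>k. {p. (- axis k 1, 0) \<bullet> p \<le> 0})"
proof -
  have "p \<in> Qv \<longleftrightarrow> p \<in> (\<Inter>k. {p. (- axis k 1, axis (Inl k) 1) \<bullet> p \<le> 0}) \<inter> (\<Inter>i. {p. (0, nv i) \<bullet> p = node_supply o' d i})
   \<inter> (\<Inter>a. {p. (0, - axis a 1) \<bullet> p \<le> 0}) \<inter> (\<Inter>k. {p. (- axis k 1, 0) \<bullet> p \<le> 0})" for p
  proof -
    obtain w xv where p: "p = (w, xv)" by fastforce
    have e1: "(- axis k 1, axis (Inl k) 1) \<bullet> (w, xv) \<le> 0 \<longleftrightarrow> xv $ Inl k \<le> w $ k" for k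
      by (simp add: inner_axis')
    have e2: "(0, nv i) \<bullet> (w, xv) = node_supply o' d i \<longleftrightarrow> incid tailf headf (vec_nth xv) i = node_supply o' d i" for i
      using incid_inner[of "vec_nth xv" i] by simp
    have e3: "(0, - axis a 1) \<bullet> (w, xv) \<le> 0 \<longleftrightarrow> 0 \<le> xv $ a" for a
      by (simp add: inner_axis')
    have e4: "(- axis k 1, 0) \<bullet> (w, xv) \<le> 0 \<longleftrightarrow> 0 \<le> w $ k" for k
      by (simp add: inner_axis')
    show ?thesis
      unfolding p Qv_def Q_def feasWX_def flows_def
      using e1 e2 e3 e4 by auto
  qed
  then show ?thesis by blast
qed

lemma Qv_poly: "polyhedron Qv"
  unfolding Qv_eq
  by (intro polyhedron_Int poly_INT polyhedron_halfspace_le polyhedron_hyperplane)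


lemma Qv_mem: "p \<in> Qv \<longleftrightarrow> (fst p, vec_nth (snd p)) \<in> Q"
  by (simp add: Qv_def)

lemma attain:
  assumes t: "\<forall>k. 0 \<le> t $ k"
  shows "\<exists>p. opt t p"
proof -
  have "Qv \<noteq> {}"
  proof -
    obtain w x where "(w, x) \<in> Q" using Q_nonempty by auto
    then have "(w, vec_lambda x) \<in> Qv" by (simp add: Qv_iff)
    then show ?thesis by blast
  qed
  moreover have "0 \<le> (t, vc) \<bullet> y" if "y \<in> Qv" for y
  proof -
    have "0 \<le> psi t (fst y, vec_nth (snd y))" using psi_nonneg[OF t] that by (simp add: Qv_mem)
    then show ?thesis by (simp add: psi_inner)
  qed
  ultimately obtain h where h: "h \<in> Qv" "\<forall>y\<in>Qv. (t, vc) \<bullet> h \<le> (t, vc) \<bullet> y"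
    using lp_attain[OF Qv_poly] by blast
  have "opt t (fst h, vec_nth (snd h))"
    unfolding opt_def
  proof (intro conjI ballI)
    show "(fst h, vec_nth (snd h)) \<in> Q" using h(1) by (simp add: Qv_mem)
    fix q assume "q \<in> Q"
    then have "(fst q, vec_lambda (snd q)) \<in> Qv" using Qv_iff[of "fst q" "snd q"] by simp
    then have "(t, vc) \<bullet> h \<le> (t, vc) \<bullet> (fst q, vec_lambda (snd q))" using h(2) by blast
    then show "psi t (fst h, vec_nth (snd h)) \<le> psi t q"
      using psi_inner[of t "fst h" "vec_nth (snd h)"] psi_inner[of t "fst q" "snd q"] by simp
  qed
  then show ?thesis by blast
qed

lemma opt_nonneg:
  assumes "opt t p" shows "\<forall>k. 0 \<le> t $ k"
proof (rule ccontr)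
  assume "\<not> (\<forall>k. 0 \<le> t $ k)"
  then obtain k where "\<not> 0 \<le> t $ k" by blast
  then have k: "t $ k < 0" by simp
  obtain w x where p: "p = (w, x)" by fastforce
  have pQ: "(w, x) \<in> Q" using assms p opt_def by auto
  have "(w + axis k 1, x) \<in> Q"
  proof -
    have "x (Inl j) \<le> (w + axis k 1) $ j \<and> 0 \<le> (w + axis k 1) $ j" for j
    proof -
      have "x (Inl j) \<le> w $ j" "0 \<le> w $ j" using pQ by (auto simp: Q_def feasWX_def)
      moreover have "w $ j \<le> (w + axis k 1) $ j" by (simp add: axis_def)
      ultimately show ?thesis by linarith
    qed
    then show ?thesis using pQ by (auto simp: Q_def feasWX_def)
  qed
  then have "psi t (w, x) \<le> psi t (w + axis k 1, x)" using assms p opt_def by auto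
  then show False using k by (simp add: psi_def inner_add_right inner_axis)
qed

lemma opt_V: "opt t p \<Longrightarrow> psi t p = V t"
proof -
  assume a: "opt t p"
  then have s: "opt t (SOME p. opt t p)" by (rule someI)
  show ?thesis using a s unfolding V_def opt_def by (auto intro: antisym)
qed

lemma V_le: "\<forall>k. 0 \<le> t $ k \<Longrightarrow> q \<in> Q \<Longrightarrow> V t \<le> psi t q"
  using attain opt_V opt_def by metis

lemma opt_iff_V: "\<forall>k. 0 \<le> t $ k \<Longrightarrow> opt t p \<longleftrightarrow> p \<in> Q \<and> psi t p = V t"
  using opt_V V_le opt_def by (metis order_refl)

lemma fval_eq:
  assumes t: "\<forall>k. 0 \<le> t $ k"
  shows "fval tailf headf o' d c t = ereal (V t)"
proof -
  obtain w0 x0 where p: "opt t (w0, x0)" using attain[OF t] by auto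
  have x0: "x0 \<in> flows tailf headf o' d" "\<forall>k. x0 (Inl k) \<le> w0 $ k"
    using p by (auto simp: opt_def Q_def feasWX_def)
  have tol: "tollc t x = inner t (\<chi> k. x (Inl k))" for x
    by (simp add: tollc_def inner_vec_def)
  have low: "V t \<le> costc c x + tollc t x" if "x \<in> flows tailf headf o' d" for x
  proof -
    have "((\<chi> k. x (Inl k)), x) \<in> Q" using that by (auto simp: Q_def feasWX_def flows_def)
    then show ?thesis using V_le[OF t] by (force simp: psi_def tol)
  qed
  have "tollc t x0 \<le> inner t w0"
    unfolding tollc_def inner_vec_def using t x0(2)
    by (auto intro!: sum_mono mult_left_mono)
  then have "costc c x0 + tollc t x0 \<le> V t" using opt_V[OF p] by (simp add: psi_def)
  then have eq: "costc c x0 + tollc t x0 = V t" using low[OF x0(1)] by simp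
  have "Inf {ereal (costc c x + tollc t x) | x. x \<in> flows tailf headf o' d} = ereal (V t)"
  proof (rule Inf_eqI)
    fix i assume "i \<in> {ereal (costc c x + tollc t x) | x. x \<in> flows tailf headf o' d}"
    then show "ereal (V t) \<le> i" using low by auto
  next
    fix y assume "\<And>i. i \<in> {ereal (costc c x + tollc t x) | x. x \<in> flows tailf headf o' d} \<Longrightarrow> y \<le> i"
    then show "y \<le> ereal (V t)" using x0(1) eq by (metis (mono_tags, lifting) mem_Collect_eq)
  qed
  then show ?thesis using t by (simp add: fval_def)
qed

lemma epi_iff: "(t, z) \<in> epi_negf tailf headf o' d c \<longleftrightarrow> (\<forall>k. 0 \<le> t $ k) \<and> - V t \<le> z"
proof (cases "\<forall>k. 0 \<le> t $ k")
  case True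
  then show ?thesis by (simp add: epi_negf_def fval_eq)
next
  case False
  then have "fval tailf headf o' d c t = -\<infinity>" by (simp only: fval_def if_not_P[OF False] if_False)
  then show ?thesis using False by (simp add: epi_negf_def)
qed

lemma Wset_eq: "Wset tailf headf o' d c t = {w. \<exists>x. opt t (w, x)}"
  unfolding Wset_def opt_def Q_def psi_def by (simp add: split_beta)

lemma W_diff:
  assumes "w \<in> Wset tailf headf o' d c t1" "w \<in> Wset tailf headf o' d c t2"
  shows "V t1 - V t2 = inner (t1 - t2) w"
proof -
  obtain x1 x2 where o1: "opt t1 (w, x1)" and o2: "opt t2 (w, x2)" using assms Wset_eq by auto
  have "psi t1 (w, x1) \<le> psi t1 (w, x2)" "psi t2 (w, x2) \<le> psi t2 (w, x1)"
    using o1 o2 unfolding opt_def by auto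
  then have "costc c x1 = costc c x2" by (simp add: psi_def)
  then show ?thesis using opt_V[OF o1] opt_V[OF o2] by (simp add: psi_def inner_diff_left)
qed


lemma psi_inner': "psi t (w, vec_nth xv) = inner (t, vc) (w, xv)"
  using psi_inner[of t w "vec_nth xv"] by simp

lemma opt_Qv: "opt t (w, vec_nth xv) \<longleftrightarrow> (w, xv) \<in> Qv \<and> (\<forall>y\<in>Qv. (t, vc) \<bullet> (w, xv) \<le> (t, vc) \<bullet> y)"
proof -
  have "(\<forall>q\<in>Q. psi t (w, vec_nth xv) \<le> psi t q) \<longleftrightarrow> (\<forall>y\<in>Qv. (t, vc) \<bullet> (w, xv) \<le> (t, vc) \<bullet> y)"
  proof
    assume a: "\<forall>q\<in>Q. psi t (w, vec_nth xv) \<le> psi t q"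
    show "\<forall>y\<in>Qv. (t, vc) \<bullet> (w, xv) \<le> (t, vc) \<bullet> y"
    proof
      fix y assume "y \<in> Qv"
      then have "(fst y, vec_nth (snd y)) \<in> Q" by (simp add: Qv_mem)
      then have "psi t (w, vec_nth xv) \<le> psi t (fst y, vec_nth (snd y))" using a by blast
      then show "(t, vc) \<bullet> (w, xv) \<le> (t, vc) \<bullet> y" by (simp add: psi_inner')
    qed
  next
    assume a: "\<forall>y\<in>Qv. (t, vc) \<bullet> (w, xv) \<le> (t, vc) \<bullet> y"
    show "\<forall>q\<in>Q. psi t (w, vec_nth xv) \<le> psi t q"
    proof
      fix q assume "q \<in> Q"
      then have "(fst q, vec_lambda (snd q)) \<in> Qv" using Qv_iff[of "fst q" "snd q"] by simp
      then have "(t, vc) \<bullet> (w, xv) \<le> (t, vc) \<bullet> (fst q, vec_lambda (snd q))" using a by blast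
      then show "psi t (w, vec_nth xv) \<le> psi t q"
        using psi_inner[of t "fst q" "snd q"] by (simp add: psi_inner')
    qed
  qed
  moreover have "(w, vec_nth xv) \<in> Q \<longleftrightarrow> (w, xv) \<in> Qv" by (simp add: Qv_mem)
  ultimately show ?thesis unfolding opt_def by blast
qed

lemma main:
  assumes act: "action_set tailf headf o' d c T"
  shows "aff_dim T + aff_dim (\<Inter>t\<in>T. Wset tailf headf o' d c t) = int CARD('k)"
proof -
  let ?E = "epi_negf tailf headf o' d c"
  let ?W = "Wset tailf headf o' d c"
  obtain F where Fface: "F face_of ?E" and Fne: "F \<noteq> {}" and nvert: "(0, 1) \<notin> aff_dir F"
    and TF: "T = fst ` F"
    using act unfolding action_set_def by blast
  have FE: "F \<subseteq> ?E" using Fface face_of_imp_subset by blast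
  have M1: "z = - V t \<and> (\<forall>k. 0 \<le> t $ k)" if tz: "(t, z) \<in> F" for t z
  proof -
    have tE: "(\<forall>k. 0 \<le> t $ k)" "- V t \<le> z" using FE tz epi_iff by blast+
    have "\<not> (- V t < z)"
    proof
      assume lt: "- V t < z"
      define a where "a = (t, - V t)"
      define b where "b = (t, 2 * z + V t)"
      have aE: "a \<in> ?E" "b \<in> ?E" using tE lt by (auto simp: a_def b_def epi_iff)
      have "midpoint a b = (t, z)" by (simp add: a_def b_def midpoint_def scaleR_2[symmetric])
      moreover have "a \<noteq> b" using lt by (simp add: a_def b_def)
      ultimately have "(t, z) \<in> open_segment a b" using midpoint_in_open_segment by metis
      then have "a \<in> F" using Fface aE tz unfolding face_of_def by blast
      then have "(t, z) - a \<in> aff_dir F" unfolding aff_dir_def using tz by (intro span_base) blast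
      then have "(1 / (z + V t)) *\<^sub>R ((t, z) - a) \<in> aff_dir F" unfolding aff_dir_def by (rule span_mul)
      moreover have "(1 / (z + V t)) *\<^sub>R ((t, z) - a) = (0, 1)" using lt by (simp add: a_def)
      ultimately show False using nvert by simp
    qed
    then show ?thesis using tE by simp
  qed
  have M2: "(t, - V t) \<in> F" if tT: "t \<in> T" for t
  proof -
    obtain p where "p \<in> F" "t = fst p" using tT TF by blast
    then show ?thesis using M1[of t "snd p"] by (metis prod.collapse)
  qed
  have Tnn: "\<forall>k. 0 \<le> t $ k" if "t \<in> T" for t using M1 M2 that by blast
  have convF: "convex F" using Fface face_of_imp_convex by blast
  have convT: "convex T" unfolding TF
    by (rule convex_linear_image[OF bounded_linear.linear[OF bounded_linear_fst] convF])
  have M4: "V ((1 - u) *\<^sub>R t1 + u *\<^sub>R t2) = (1 - u) * V t1 + u * V t2"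
    if "t1 \<in> T" "t2 \<in> T" "0 \<le> u" "u \<le> 1" for t1 t2 u
  proof -
    have "(1 - u) *\<^sub>R (t1, - V t1) + u *\<^sub>R (t2, - V t2) \<in> F"
      using convexD[OF convF M2[OF that(1)] M2[OF that(2)], of "1 - u" u] that(3,4) by simp
    then have "((1 - u) *\<^sub>R t1 + u *\<^sub>R t2, - ((1 - u) * V t1 + u * V t2)) \<in> F"
      by (simp add: algebra_simps)
    then show ?thesis using M1 by force
  qed
  have "T \<noteq> {}" using Fne TF by blast
  then obtain t0 where "t0 \<in> rel_interior T" using rel_interior_eq_empty[OF convT] by blast
  then obtain e where e: "e > 0" "cball t0 e \<inter> affine hull T \<subseteq> T" and t0T: "t0 \<in> T"
    using mem_rel_interior_cball by blast
  have M6: "\<exists>t'\<in>T. \<exists>l. 0 < l \<and> l < 1 \<and> t0 = l *\<^sub>R t' + (1 - l) *\<^sub>R t" if tT: "t \<in> T" for t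
  proof (cases "t = t0")
    case True
    then show ?thesis using t0T by (intro bexI[of _ t0] exI[of _ "1/2"]) (auto simp: scaleR_left_distrib[symmetric])
  next
    case False
    define \<delta> where "\<delta> = e / norm (t - t0)"
    have dpos: "\<delta> > 0" using False e by (simp add: \<delta>_def)
    define t' where "t' = (1 + \<delta>) *\<^sub>R t0 + (- \<delta>) *\<^sub>R t"
    have "t' \<in> affine hull T" unfolding t'_def
      by (intro mem_affine[OF affine_affine_hull]) (auto simp: hull_inc t0T tT)
    moreover have "dist t0 t' = e"
    proof -
      have "t0 - t' = \<delta> *\<^sub>R (t - t0)" by (simp add: t'_def algebra_simps)
      then show ?thesis using False e dpos by (simp add: dist_norm \<delta>_def)
    qed
    ultimately have t'T: "t' \<in> T" using e by auto
    define l where "l = 1 / (1 + \<delta>)"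
    have l: "0 < l" "l < 1" using dpos by (auto simp: l_def)
    have "l *\<^sub>R t' + (1 - l) *\<^sub>R t = t0"
    proof -
      have one: "(1 / (1 + \<delta>)) * (1 + \<delta>) = 1" using dpos by simp
      have "l *\<^sub>R t' = (1 / (1 + \<delta>)) *\<^sub>R ((1 + \<delta>) *\<^sub>R t0) - (1 / (1 + \<delta>)) *\<^sub>R (\<delta> *\<^sub>R t)"
        by (simp add: l_def t'_def scaleR_right_diff_distrib)
      also have "\<dots> = t0 - (\<delta> / (1 + \<delta>)) *\<^sub>R t"
        by (simp only: scaleR_scaleR one scaleR_one) simp
      finally have "l *\<^sub>R t' = t0 - (\<delta> / (1 + \<delta>)) *\<^sub>R t" .
      moreover have "1 - l = \<delta> / (1 + \<delta>)" using dpos by (simp add: l_def field_simps)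
      ultimately show ?thesis by simp
    qed
    then show ?thesis using t'T l by metis
  qed
  have Wsub: "w \<in> ?W t" if wW: "w \<in> ?W t0" and tT: "t \<in> T" for w t
  proof -
    obtain x where ox: "opt t0 (w, x)" using wW Wset_eq by auto
    have wxQ: "(w, x) \<in> Q" using ox opt_def by blast
    obtain t' l where t'T: "t' \<in> T" and l: "0 < l" "l < 1" and t0eq: "t0 = l *\<^sub>R t' + (1 - l) *\<^sub>R t"
      using M6[OF tT] by blast
    have lin: "psi t0 (w, x) = l * psi t' (w, x) + (1 - l) * psi t (w, x)"
      unfolding t0eq psi_def by (simp add: inner_add_left algebra_simps)
    have "V t0 = (1 - (1 - l)) * V t' + (1 - l) * V t"
      using M4[OF t'T tT, of "1 - l"] l t0eq by simp
    moreover have "V t' \<le> psi t' (w, x)" using V_le[OF Tnn[OF t'T] wxQ] .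
    moreover have "V t \<le> psi t (w, x)" using V_le[OF Tnn[OF tT] wxQ] .
    moreover have "psi t0 (w, x) = V t0" using opt_V[OF ox] .
    ultimately have "l * (psi t' (w, x) - V t') + (1 - l) * (psi t (w, x) - V t) = 0"
      using lin by (simp add: algebra_simps)
    moreover have "0 \<le> l * (psi t' (w, x) - V t')" using l \<open>V t' \<le> _\<close> by simp
    moreover have "0 \<le> (1 - l) * (psi t (w, x) - V t)" using l \<open>V t \<le> psi t (w, x)\<close> by simp
    ultimately have "(1 - l) * (psi t (w, x) - V t) = 0" by linarith
    then have "psi t (w, x) = V t" using l by simp
    then have "opt t (w, x)" using opt_iff_V[OF Tnn[OF tT]] wxQ by blast
    then show ?thesis using Wset_eq by auto
  qed
  have G_eq: "(\<Inter>t\<in>T. ?W t) = ?W t0" using Wsub t0T by blast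
  obtain g0 where g0: "g0 \<in> ?W t0"
  proof -
    obtain p where "opt t0 p" using attain[OF Tnn[OF t0T]] by blast
    then have "fst p \<in> ?W t0" using Wset_eq by (metis (mono_tags, lifting) mem_Collect_eq prod.collapse)
    then show ?thesis using that by blast
  qed
  have M9: "inner (t1 - t2) (w1 - w2) = 0" if "t1 \<in> T" "t2 \<in> T" "w1 \<in> ?W t0" "w2 \<in> ?W t0" for t1 t2 w1 w2
  proof -
    have "V t1 - V t2 = inner (t1 - t2) w1" using W_diff Wsub that by blast
    moreover have "V t1 - V t2 = inner (t1 - t2) w2" using W_diff Wsub that by blast
    ultimately show ?thesis by (simp add: inner_diff_right)
  qed
  define H where "H = {h\<in>Qv. \<forall>y\<in>Qv. (t0, vc) \<bullet> h \<le> (t0, vc) \<bullet> y}"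
  have H_char: "h \<in> H \<longleftrightarrow> opt t0 (fst h, vec_nth (snd h))" for h
    using opt_Qv[of t0 "fst h" "snd h"] unfolding H_def by simp
  have Hne: "H \<noteq> {}"
  proof -
    obtain x where "opt t0 (g0, x)" using g0 Wset_eq by auto
    then have "(g0, vec_lambda x) \<in> H" using H_char[of "(g0, vec_lambda x)"] by (simp add: vec_nth_lambda)
    then show ?thesis by blast
  qed
  obtain \<kappa> where kpos: "\<kappa> > 0" and kprop: "\<And>v h y. (\<And>h1 h2. h1\<in>H \<Longrightarrow> h2\<in>H \<Longrightarrow> v \<bullet> (h1 - h2) = 0)
        \<Longrightarrow> norm v < \<kappa> \<Longrightarrow> h \<in> H \<Longrightarrow> y \<in> Qv \<Longrightarrow> ((t0, vc) + v) \<bullet> h \<le> ((t0, vc) + v) \<bullet> y"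
    using perturb[OF Qv_poly H_def Hne] by blast
  define U' where "U' = {u. \<forall>g1\<in>?W t0. \<forall>g2\<in>?W t0. inner u (g1 - g2) = 0}"
  have M10: "?W t0 \<subseteq> ?W (t0 + u) \<and> (\<forall>k. 0 \<le> (t0 + u) $ k)" if uU: "u \<in> U'" and nu: "norm u < \<kappa>" for u
  proof -
    have hyp: "(u, 0) \<bullet> (h1 - h2) = 0" if "h1 \<in> H" "h2 \<in> H" for h1 h2
    proof -
      have "fst h1 \<in> ?W t0" "fst h2 \<in> ?W t0" using that H_char Wset_eq by auto
      then have "inner u (fst h1 - fst h2) = 0" using uU U'_def by blast
      then show ?thesis by (metis fst_diff inner_Pair inner_zero_left add.right_neutral prod.collapse snd_diff)
    qed
    have nu': "norm ((u, 0) :: (real^'k) \<times> (real^('k+'u))) < \<kappa>" using nu by (simp add: norm_Pair)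
    have sub: "?W t0 \<subseteq> ?W (t0 + u)"
    proof
      fix w assume "w \<in> ?W t0"
      then obtain x where ox: "opt t0 (w, x)" using Wset_eq by auto
      then have hH: "(w, vec_lambda x) \<in> H" using H_char[of "(w, vec_lambda x)"] by (simp add: vec_nth_lambda)
      then have hQ: "(w, vec_lambda x) \<in> Qv" using H_def by blast
      have "\<forall>y\<in>Qv. (t0 + u, vc) \<bullet> (w, vec_lambda x) \<le> (t0 + u, vc) \<bullet> y"
        using kprop[OF hyp nu' hH] by simp
      then have "opt (t0 + u) (w, vec_nth (vec_lambda x))" using opt_Qv hQ by blast
      then show "w \<in> ?W (t0 + u)" using Wset_eq by (auto simp: vec_nth_lambda)
    qed
    moreover have "\<forall>k. 0 \<le> (t0 + u) $ k"
    proof -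
      obtain x where "opt (t0 + u) (g0, x)" using sub g0 Wset_eq by auto
      then show ?thesis using opt_nonneg by blast
    qed
    ultimately show ?thesis by blast
  qed
  have M11: "t0 + u \<in> T" if uU: "u \<in> U'" and nu: "norm u < \<kappa>" for u
  proof (cases "u = 0")
    case True then show ?thesis using t0T by simp
  next
    case False
    have muU: "- u \<in> U'" using uU unfolding U'_def by (simp add: inner_minus_left)
    have A: "?W t0 \<subseteq> ?W (t0 + u)" "\<forall>k. 0 \<le> (t0 + u) $ k" using M10[OF uU nu] by auto
    have B: "?W t0 \<subseteq> ?W (t0 - u)" "\<forall>k. 0 \<le> (t0 - u) $ k" using M10[OF muU] nu by auto
    have d1: "V (t0 + u) - V t0 = inner u g0" using W_diff[of g0 "t0 + u" t0] A g0 by auto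
    have d2: "V (t0 - u) - V t0 = - inner u g0" using W_diff[of g0 "t0 - u" t0] B g0 by (auto simp: inner_minus_left)
    define a where "a = (t0 + u, - V (t0 + u))"
    define b where "b = (t0 - u, - V (t0 - u))"
    have aE: "a \<in> ?E" "b \<in> ?E" using A(2) B(2) by (auto simp: a_def b_def epi_iff)
    have "midpoint a b = (t0, - V t0)"
    proof -
      have "(t0 + u) + (t0 - u) = 2 *\<^sub>R t0" by (simp add: scaleR_2)
      moreover have "- V (t0 + u) + - V (t0 - u) = 2 * (- V t0)" using d1 d2 by simp
      ultimately show ?thesis by (simp add: a_def b_def midpoint_def)
    qed
    moreover have "a \<noteq> b"
    proof
      assume "a = b"
      then have "(t0 + u) - (t0 - u) = 0" by (simp add: a_def b_def)
      moreover have "(t0 + u) - (t0 - u) = 2 *\<^sub>R u" by (simp add: scaleR_2)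
      ultimately show False using False by simp
    qed
    ultimately have "(t0, - V t0) \<in> open_segment a b" using midpoint_in_open_segment by metis
    then have "a \<in> F" using Fface aE M2[OF t0T] unfolding face_of_def by blast
    then show ?thesis using TF a_def by force
  qed
  define G' where "G' = (\<lambda>x. x - g0) ` ?W t0"
  define T' where "T' = (\<lambda>x. x - t0) ` T"
  have dT: "aff_dim T = int (dim T')" unfolding T'_def
    by (rule aff_dim_eq_dim_subtract[OF hull_inc[OF t0T]])
  have dG: "aff_dim (?W t0) = int (dim G')" unfolding G'_def
    by (rule aff_dim_eq_dim_subtract[OF hull_inc[OF g0]])
  define U where "U = {y \<in> UNIV. \<forall>x \<in> span G'. orthogonal x y}"
  have dU: "dim U + dim (span G') = dim (UNIV :: (real^'k) set)"
    unfolding U_def by (rule dim_subspace_orthogonal_to_vectors) (auto simp: subspace_span)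
  have T'U: "T' \<subseteq> U"
  proof
    fix y assume "y \<in> T'"
    then obtain t where tT: "t \<in> T" and y: "y = t - t0" using T'_def by blast
    have "orthogonal y x" if "x \<in> span G'" for x
    proof (rule orthogonal_to_span[OF that])
      fix z assume "z \<in> G'"
      then obtain g where "g \<in> ?W t0" "z = g - g0" using G'_def by blast
      then show "orthogonal y z" using M9[OF tT t0T _ g0] y by (simp add: orthogonal_def)
    qed
    then show "y \<in> U" unfolding U_def by (simp add: orthogonal_commute)
  qed
  have UT': "U \<subseteq> span T'"
  proof
    fix y assume yU: "y \<in> U"
    show "y \<in> span T'"
    proof (cases "y = 0")
      case True then show ?thesis by (simp add: span_zero)
    next
      case False
      define u where "u = (\<kappa> / (2 * norm y)) *\<^sub>R y"
      have "u \<in> U'" unfolding U'_def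
      proof (intro CollectI ballI)
        fix g1 g2 assume g: "g1 \<in> ?W t0" "g2 \<in> ?W t0"
        have "g1 - g2 = (g1 - g0) - (g2 - g0)" by simp
        also have "\<dots> \<in> span G'" unfolding G'_def using g
          by (intro span_diff span_base) auto
        finally have "orthogonal (g1 - g2) y" using yU U_def by blast
        then show "inner u (g1 - g2) = 0" by (simp add: u_def orthogonal_def inner_commute)
      qed
      moreover have "norm u < \<kappa>" using False kpos by (simp add: u_def)
      ultimately have "t0 + u \<in> T" using M11 by blast
      then have "u \<in> T'" unfolding T'_def by force
      then have "((2 * norm y) / \<kappa>) *\<^sub>R u \<in> span T'" by (intro span_mul span_base)
      moreover have "((2 * norm y) / \<kappa>) *\<^sub>R u = y" using False kpos by (simp add: u_def)
      ultimately show ?thesis by simp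
    qed
  qed
  have "dim T' = dim U"
  proof (rule antisym)
    show "dim T' \<le> dim U" using T'U by (rule dim_subset)
    have "dim U \<le> dim (span T')" using UT' by (rule dim_subset)
    then show "dim U \<le> dim T'" by simp
  qed
  moreover have "dim (UNIV :: (real^'k) set) = CARD('k)" by simp
  ultimately show ?thesis using G_eq dT dG dU by simp
qed
end

theorem theorem2:
  fixes tailf headf :: "('k::finite + 'u::finite) \<Rightarrow> 'v::finite"
    and c :: "('k + 'u) \<Rightarrow> real"
    and o' d :: 'v
    and T :: "(real ^ 'k) set"
  assumes c_nonneg: "\<forall>a. 0 \<le> c a"
    and od: "o' \<noteq> d"
    and toll_free_path: "(o', d) \<in> {(tailf (Inr u), headf (Inr u)) | u. True}\<^sup>*"
    and act: "action_set tailf headf o' d c T"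
  shows "aff_dim T + aff_dim (\<Inter>t\<in>T. Wset tailf headf o' d c t) = int CARD('k)"
  proof -
  interpret net tailf headf c o' d
    using c_nonneg od toll_free_path by unfold_locales
  show ?thesis using main[OF act] .
qed

end
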